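(* Let $\pi,\pi'\in\mathbb P$ and let $F:[0,1]\cap\mathbb Q\to\mathbb Q$ be a piecewise linear continuous map with $F(0)=0$ and $F(1)\in a_0^{-1}\mathbb Z$. Assume $\pi(t)=\pi'(t)+F(t)\delta$ for all $t$. Then for each $w\in W$, $(S_w\pi)(t)=(S_w\pi')(t)+F(t)\delta$ for all $t\in[0,1]\cap\mathbb Q$.
   Context: $\mathfrak g$ is an affine Lie algebra over $\mathbb Q$ of affine type with index set $I$, simple coroots $h_j$, fundamental weights $\Lambda_j$, null root $\delta$, $a_0=2$ if $\mathfrak g$ is of type $A^{(2)}_{2\ell}$ and $a_0=1$ otherwise, Weyl group $W=\langle r_j\mid j\in I\rangle$, weight lattice $P=\bigoplus_j\mathbb Z\Lambda_j\oplus\mathbb Za_0^{-1}\delta$. $\mathbb P$ is the set of piecewise linear continuous maps $\pi:[0,1]\cap\mathbb Q\to\mathbb Q\otimes P$ with $\pi(0)=0$, $\pi(1)\in P$. $e_j,f_j$ ($j\in I$) are Littelmann's root operators on $\mathbb P\cup\{\mathbf0\}$. For $j\in I$, $S_j\pi=f_j^n\pi$ if $n=\pi(1)(h_j)\ge0$ and $S_j\pi=e_j^{-n}\pi$ if $n<0$; $w\mapsto S_w$ is the unique action of $W$ on $\mathbb P$ with $S_{r_j}=S_j$ (Littelmann). *)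

theory Defs
  imports Complex_Main
begin

section \<open>Affine generalized Cartan matrices (Kac's conventions)\<close>

text \<open>Index set I is a finite type 'i.  A i j is the Cartan entry a_ij = alpha_j(h_i).\<close>

definition gcm :: "('i \<Rightarrow> 'i \<Rightarrow> int) \<Rightarrow> bool" where
  "gcm A \<longleftrightarrow> (\<forall>i. A i i = 2) \<and> (\<forall>i j. i \<noteq> j \<longrightarrow> A i j \<le> 0)
     \<and> (\<forall>i j. A i j = 0 \<longleftrightarrow> A j i = 0)"

definition indecomposable :: "('i \<Rightarrow> 'i \<Rightarrow> int) \<Rightarrow> bool" where
  "indecomposable A \<longleftrightarrow>
     (\<forall>J. J \<noteq> {} \<and> J \<noteq> UNIV \<longrightarrow> (\<exists>i\<in>J. \<exists>j. j \<notin> J \<and> A i j \<noteq> 0))"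

definition affine_gcm :: "('i::finite \<Rightarrow> 'i \<Rightarrow> int) \<Rightarrow> bool" where
  "affine_gcm A \<longleftrightarrow> gcm A \<and> indecomposable A \<and>
     (\<exists>u :: 'i \<Rightarrow> rat. (\<forall>i. u i > 0) \<and> (\<forall>i. (\<Sum>j\<in>UNIV. of_int (A i j) * u j) = 0))"

text \<open>The labels a_i (delta = sum a_i alpha_i): coprime positive integers with A a = 0.\<close>
definition null_labels :: "('i::finite \<Rightarrow> 'i \<Rightarrow> int) \<Rightarrow> ('i \<Rightarrow> nat) \<Rightarrow> bool" where
  "null_labels A a \<longleftrightarrow> (\<forall>i. a i > 0) \<and> (\<forall>i. (\<Sum>j\<in>UNIV. A i j * int (a j)) = 0)
     \<and> (\<forall>d::nat. (\<forall>i. d dvd a i) \<longrightarrow> d = 1)"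

text \<open>The dual labels a_i^vee (K = sum a_i^vee h_i): labels of the transposed matrix.\<close>
definition dual_labels :: "('i::finite \<Rightarrow> 'i \<Rightarrow> int) \<Rightarrow> ('i \<Rightarrow> nat) \<Rightarrow> bool" where
  "dual_labels A av \<longleftrightarrow> null_labels (\<lambda>i j. A j i) av"

text \<open>The node 0 of Kac's numbering: a_0^vee = 1, and a_0 = 1 unless no node has
  a_i = a_i^vee = 1 (which happens exactly for type A_{2l}^{(2)}, where a_0 = 2).\<close>
definition node0 :: "('i \<Rightarrow> nat) \<Rightarrow> ('i \<Rightarrow> nat) \<Rightarrow> 'i \<Rightarrow> bool" where
  "node0 a av i0 \<longleftrightarrow> av i0 = 1 \<and> (a i0 = 1 \<or> \<not> (\<exists>i. a i = 1 \<and> av i = 1))"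

text \<open>An element of Q \<otimes> P is written sum_j c_j Lambda_j + c delta; we represent it by
  the coefficient function: v (Some j) = c_j, v None = c.\<close>
type_synonym 'i wt = "'i option \<Rightarrow> rat"

definition wadd :: "'i wt \<Rightarrow> 'i wt \<Rightarrow> 'i wt" where
  "wadd v w = (\<lambda>k. v k + w k)"

definition wsmul :: "rat \<Rightarrow> 'i wt \<Rightarrow> 'i wt" where
  "wsmul c v = (\<lambda>k. c * v k)"

definition wzero :: "'i wt" where
  "wzero = (\<lambda>k. 0)"

definition dlt :: "'i wt" where
  "dlt = (\<lambda>k. if k = None then 1 else 0)"

text \<open>Pairing with the simple coroot h_j: Lambda_i(h_j) = [i = j], delta(h_j) = 0.\<close>
definition pair :: "'i wt \<Rightarrow> 'i \<Rightarrow> rat" where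
  "pair v j = v (Some j)"

definition in_P :: "nat \<Rightarrow> 'i wt \<Rightarrow> bool" where
  "in_P a0 v \<longleftrightarrow> (\<forall>j. v (Some j) \<in> \<int>) \<and> of_nat a0 * v None \<in> \<int>"

text \<open>Simple root alpha_j = sum_i a_ij Lambda_i + [j = 0] a_0^{-1} delta
  (Kac: Lambda_i(d) = 0, alpha_i(d) = [i = 0], so delta(d) = a_0).\<close>
definition sroot :: "('i \<Rightarrow> 'i \<Rightarrow> int) \<Rightarrow> 'i \<Rightarrow> nat \<Rightarrow> 'i \<Rightarrow> 'i wt" where
  "sroot A i0 a0 j = (\<lambda>k. case k of Some i \<Rightarrow> of_int (A i j)
                                | None \<Rightarrow> (if j = i0 then 1 / of_nat a0 else 0))"

definition srefl :: "('i \<Rightarrow> 'i \<Rightarrow> int) \<Rightarrow> 'i \<Rightarrow> nat \<Rightarrow> 'i \<Rightarrow> 'i wt \<Rightarrow> 'i wt" where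
  "srefl A i0 a0 j v = wadd v (wsmul (- pair v j) (sroot A i0 a0 j))"

definition refl_word :: "('i \<Rightarrow> 'i \<Rightarrow> int) \<Rightarrow> 'i \<Rightarrow> nat \<Rightarrow> 'i list \<Rightarrow> ('i wt \<Rightarrow> 'i wt)" where
  "refl_word A i0 a0 js = foldr (\<lambda>j g. srefl A i0 a0 j \<circ> g) js id"

text \<open>W = subgroup of GL(Q \<otimes> P) generated by the r_j (a group, since r_j^2 = 1).\<close>
definition weyl :: "('i \<Rightarrow> 'i \<Rightarrow> int) \<Rightarrow> 'i \<Rightarrow> nat \<Rightarrow> ('i wt \<Rightarrow> 'i wt) set" where
  "weyl A i0 a0 = range (refl_word A i0 a0)"

text \<open>Paths are maps [0,1] \<inter> Q \<rightarrow> Q \<otimes> P; represented as functions on rat whose values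
  outside [0,1] are irrelevant.  Piecewise linear (hence continuous) on [0,1]:\<close>
definition pl_on01 :: "(rat \<Rightarrow> 'k \<Rightarrow> rat) \<Rightarrow> bool" where
  "pl_on01 g \<longleftrightarrow> (\<exists>ts. ts \<noteq> [] \<and> hd ts = 0 \<and> last ts = 1 \<and> sorted_wrt (<) ts \<and>
     (\<forall>i < length ts - 1. \<forall>t. ts!i \<le> t \<and> t \<le> ts!(i+1) \<longrightarrow>
        (\<forall>k. g t k = g (ts!i) k + (t - ts!i) / (ts!(i+1) - ts!i) * (g (ts!(i+1)) k - g (ts!i) k))))"

definition pl_scalar :: "(rat \<Rightarrow> rat) \<Rightarrow> bool" where
  "pl_scalar F \<longleftrightarrow> pl_on01 (\<lambda>t (_::unit). F t)"

definition paths :: "nat \<Rightarrow> (rat \<Rightarrow> 'i wt) set" where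
  "paths a0 = {\<pi>. pl_on01 \<pi> \<and> \<pi> 0 = wzero \<and> in_P a0 (\<pi> 1)}"

text \<open>Minimum of g on [a,b] \<inter> Q (it exists for piecewise linear g).\<close>
definition minon :: "(rat \<Rightarrow> rat) \<Rightarrow> rat \<Rightarrow> rat \<Rightarrow> rat" where
  "minon g a b = (THE q. (\<exists>s. a \<le> s \<and> s \<le> b \<and> g s = q) \<and> (\<forall>s. a \<le> s \<and> s \<le> b \<longrightarrow> q \<le> g s))"

text \<open>Littelmann's f_j (Annals 1995, \<section>1), written in closed form: with h(t) = pi(t)(h_j),
  Q = min h, f_j pi = 0 if h(1) - Q < 1, otherwise
  (f_j pi)(t) = pi(t) - min(1, min_{s \<in> [t,1]} h(s) - Q) alpha_j,
  which is the path obtained by applying s_j to the pieces of pi between x_0 and x_1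
  on which h is increasing and equals its right running minimum.  None represents 0.\<close>
definition fop :: "('i \<Rightarrow> 'i \<Rightarrow> int) \<Rightarrow> 'i \<Rightarrow> nat \<Rightarrow> 'i \<Rightarrow> (rat \<Rightarrow> 'i wt) \<Rightarrow> (rat \<Rightarrow> 'i wt) option" where
  "fop A i0 a0 j \<pi> =
     (let h = (\<lambda>t. pair (\<pi> t) j); Q = minon h 0 1 in
      if h 1 - Q < 1 then None
      else Some (\<lambda>t. wadd (\<pi> t) (wsmul (- min 1 (minon h t 1 - Q)) (sroot A i0 a0 j))))"

text \<open>Littelmann's e_j: e_j pi = 0 if Q > -1, otherwise
  (e_j pi)(t) = pi(t) + max(0, Q + 1 - min_{s \<in> [0,t]} h(s)) alpha_j.\<close>
definition eop :: "('i \<Rightarrow> 'i \<Rightarrow> int) \<Rightarrow> 'i \<Rightarrow> nat \<Rightarrow> 'i \<Rightarrow> (rat \<Rightarrow> 'i wt) \<Rightarrow> (rat \<Rightarrow> 'i wt) option" where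
  "eop A i0 a0 j \<pi> =
     (let h = (\<lambda>t. pair (\<pi> t) j); Q = minon h 0 1 in
      if Q > -1 then None
      else Some (\<lambda>t. wadd (\<pi> t) (wsmul (max 0 (Q + 1 - minon h 0 t)) (sroot A i0 a0 j))))"

definition opow :: "(('a \<Rightarrow> 'a option)) \<Rightarrow> nat \<Rightarrow> 'a \<Rightarrow> 'a option" where
  "opow g n x = ((\<lambda>y. Option.bind y g) ^^ n) (Some x)"

text \<open>S_j pi = f_j^n pi if n = pi(1)(h_j) \<ge> 0, and e_j^{-n} pi if n < 0
  (never 0 for pi in the path set, by Littelmann).\<close>
definition Sop :: "('i \<Rightarrow> 'i \<Rightarrow> int) \<Rightarrow> 'i \<Rightarrow> nat \<Rightarrow> 'i \<Rightarrow> (rat \<Rightarrow> 'i wt) \<Rightarrow> (rat \<Rightarrow> 'i wt)" where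
  "Sop A i0 a0 j \<pi> =
     (let n = pair (\<pi> 1) j in
      the (if n \<ge> 0 then opow (fop A i0 a0 j) (nat \<lfloor>n\<rfloor>) \<pi>
           else opow (eop A i0 a0 j) (nat \<lfloor>- n\<rfloor>) \<pi>))"

definition Sword :: "('i \<Rightarrow> 'i \<Rightarrow> int) \<Rightarrow> 'i \<Rightarrow> nat \<Rightarrow> 'i list \<Rightarrow> (rat \<Rightarrow> 'i wt) \<Rightarrow> (rat \<Rightarrow> 'i wt)" where
  "Sword A i0 a0 js = foldr (\<lambda>j g. Sop A i0 a0 j \<circ> g) js id"

text \<open>The action w \<mapsto> S_w: S_w = S_{j_1} ... S_{j_k} for an expression w = r_{j_1} ... r_{j_k}
  (well defined by Littelmann's theorem).\<close>
definition Sw :: "('i \<Rightarrow> 'i \<Rightarrow> int) \<Rightarrow> 'i \<Rightarrow> nat \<Rightarrow> ('i wt \<Rightarrow> 'i wt) \<Rightarrow> (rat \<Rightarrow> 'i wt) \<Rightarrow> (rat \<Rightarrow> 'i wt)" where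
  "Sw A i0 a0 w = Sword A i0 a0 (SOME js. refl_word A i0 a0 js = w)"

end

theory Submission
  imports Defs
begin

definition affon :: "(rat \<Rightarrow> rat) \<Rightarrow> rat \<Rightarrow> rat \<Rightarrow> bool" where
 "affon g x y \<longleftrightarrow> (\<exists>\<alpha> \<beta>. \<forall>z. x \<le> z \<and> z \<le> y \<longrightarrow> g z = \<alpha> + \<beta> * z)"
definition sfree :: "rat set \<Rightarrow> rat \<Rightarrow> rat \<Rightarrow> bool" where
 "sfree S x y \<longleftrightarrow> (\<forall>s\<in>S. \<not> (x < s \<and> s < y))"
definition PLw :: "rat set \<Rightarrow> (rat \<Rightarrow> rat) \<Rightarrow> bool" where
 "PLw S g \<longleftrightarrow> finite S \<and> (\<forall>x y. 0 \<le> x \<longrightarrow> x \<le> y \<longrightarrow> y \<le> 1 \<longrightarrow> sfree S x y \<longrightarrow> affon g x y)"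
definition PL :: "(rat \<Rightarrow> rat) \<Rightarrow> bool" where "PL g \<longleftrightarrow> (\<exists>S. PLw S g)"

lemma lin_between:
  fixes a b x y z :: rat
  assumes "x \<le> z" "z \<le> y"
  shows "min (a+b*x) (a+b*y) \<le> a+b*z \<and> a+b*z \<le> max (a+b*x) (a+b*y)"
proof (cases "b \<ge> 0")
  case True
  then have "b*x \<le> b*z" "b*z \<le> b*y" using assms by (auto intro: mult_left_mono)
  then show ?thesis by auto
next
  case False
  then have "b*z \<le> b*x" "b*y \<le> b*z" using assms by (auto intro: mult_left_mono_neg)
  then show ?thesis by auto
qed

lemma affon_sub: "affon g p q \<Longrightarrow> p \<le> x \<Longrightarrow> y \<le> q \<Longrightarrow> affon g x y"
  unfolding affon_def by (meson order_trans)

lemma affon_min: assumes "affon g x y" "x \<le> z" "z \<le> y" shows "min (g x) (g y) \<le> g z"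
proof -
  obtain \<alpha> \<beta> where h: "\<forall>z. x \<le> z \<and> z \<le> y \<longrightarrow> g z = \<alpha> + \<beta>*z" using assms(1) unfolding affon_def by blast
  have "x \<le> y" using assms by simp
  then show ?thesis using h assms lin_between[of x z y \<alpha> \<beta>] by auto
qed

lemma affon_triv: "affon g x x"
  unfolding affon_def by (rule exI[of _ "g x"], rule exI[of _ 0]) auto

lemma PLw_mono: "PLw S g \<Longrightarrow> finite S' \<Longrightarrow> S \<subseteq> S' \<Longrightarrow> PLw S' g"
  unfolding PLw_def sfree_def by blast

lemma PL_add: assumes "PL f" "PL g" shows "PL (\<lambda>t. f t + g t)"
proof -
  obtain S1 S2 where 1: "PLw S1 f" and 2: "PLw S2 g" using assms unfolding PL_def by blast
  have "PLw (S1 \<union> S2) (\<lambda>t. f t + g t)"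
    unfolding PLw_def
  proof (intro conjI allI impI)
    show "finite (S1 \<union> S2)" using 1 2 unfolding PLw_def by auto
    fix x y assume a: "0 \<le> x" "x \<le> y" "y \<le> 1" "sfree (S1 \<union> S2) x y"
    then have "sfree S1 x y" "sfree S2 x y" unfolding sfree_def by auto
    then have "affon f x y" "affon g x y" using 1 2 a unfolding PLw_def by auto
    then obtain a1 b1 a2 b2 where "\<forall>z. x \<le> z \<and> z \<le> y \<longrightarrow> f z = a1 + b1*z"
      "\<forall>z. x \<le> z \<and> z \<le> y \<longrightarrow> g z = a2 + b2*z" unfolding affon_def by blast
    then show "affon (\<lambda>t. f t + g t) x y" unfolding affon_def
      by (intro exI[of _ "a1+a2"] exI[of _ "b1+b2"]) (auto simp: algebra_simps)
  qed
  then show ?thesis unfolding PL_def by blast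
qed

lemma PL_scale: assumes "PL f" shows "PL (\<lambda>t. c * f t)"
proof -
  obtain S1 where 1: "PLw S1 f" using assms unfolding PL_def by blast
  have "PLw S1 (\<lambda>t. c * f t)"
    unfolding PLw_def
  proof (intro conjI allI impI)
    show "finite S1" using 1 unfolding PLw_def by auto
    fix x y assume a: "0 \<le> x" "x \<le> y" "y \<le> 1" "sfree S1 x y"
    then have "affon f x y" using 1 a unfolding PLw_def by auto
    then obtain a1 b1 where "\<forall>z. x \<le> z \<and> z \<le> y \<longrightarrow> f z = a1 + b1*z"
      unfolding affon_def by blast
    then show "affon (\<lambda>t. c * f t) x y" unfolding affon_def
      by (intro exI[of _ "c*a1"] exI[of _ "c*b1"]) (auto simp: algebra_simps)
  qed
  then show ?thesis unfolding PL_def by blast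
qed

lemma PL_const: "PL (\<lambda>t. c)"
proof -
  have "PLw {} (\<lambda>t. c)" unfolding PLw_def affon_def
    by (intro conjI allI impI exI[of _ c] exI[of _ 0]) auto
  then show ?thesis unfolding PL_def by blast
qed

lemma PL_diff: assumes "PL f" "PL g" shows "PL (\<lambda>t. f t - g t)"
  using PL_add[OF assms(1) PL_scale[OF assms(2), of "-1"]] by simp

lemma enclose:
  assumes "finite S" "a \<in> S" "b \<in> S" "a \<le> x" "x \<le> y" "y \<le> b" "sfree S x y"
  shows "\<exists>p q. p \<in> S \<and> q \<in> S \<and> a \<le> p \<and> p \<le> x \<and> y \<le> q \<and> q \<le> b \<and> sfree S p q"
proof -
  define P where "P = {s\<in>S. a \<le> s \<and> s \<le> x}"
  define Q where "Q = {s\<in>S. y \<le> s \<and> s \<le> b}"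
  have fP: "finite P" "P \<noteq> {}" unfolding P_def using assms by auto
  have fQ: "finite Q" "Q \<noteq> {}" unfolding Q_def using assms by auto
  define p where "p = Max P"
  define q where "q = Min Q"
  have p: "p \<in> P" using fP Max_in p_def by blast
  have q: "q \<in> Q" using fQ Min_in q_def by blast
  have "sfree S p q" unfolding sfree_def
  proof (intro ballI notI)
    fix s assume s: "s \<in> S" "p < s \<and> s < q"
    show False
    proof (cases "s \<le> x")
      case True
      then have "s \<in> P" unfolding P_def using s p P_def by auto
      then have "s \<le> p" using fP p_def by auto
      then show False using s by simp
    next
      case False
      show False
      proof (cases "y \<le> s")
        case True
        then have "s \<in> Q" unfolding Q_def using s q Q_def by auto
        then have "q \<le> s" using fQ q_def by auto
        then show False using s by simp
      next
        case False
        then show False using `\<not> s \<le> x` assms(7) s unfolding sfree_def by auto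
      qed
    qed
  qed
  then show ?thesis using p q unfolding P_def Q_def by blast
qed

lemma PL_min_gen:
  fixes f g :: "rat \<Rightarrow> rat \<Rightarrow> rat \<Rightarrow> rat" and G :: "rat \<Rightarrow> rat"
  assumes fin: "finite S" and S01: "0 \<in> S" "1 \<in> S"
  and H: "\<And>p q. p\<in>S \<Longrightarrow> q\<in>S \<Longrightarrow> 0 \<le> p \<Longrightarrow> p \<le> q \<Longrightarrow> q \<le> 1 \<Longrightarrow> sfree S p q \<Longrightarrow>
     affon (f p q) p q \<and> affon (g p q) p q \<and> (\<forall>t. p \<le> t \<and> t \<le> q \<longrightarrow> G t = min (f p q t) (g p q t))"
  shows "PL G"
proof -
  define chi where "chi = (\<lambda>(p,q). p + (q-p) * (f p q p - g p q p) / ((f p q p - g p q p) - (f p q q - g p q q)))"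
  define S' where "S' = S \<union> chi ` (S \<times> S)"
  have "PLw S' G"
    unfolding PLw_def
  proof (intro conjI allI impI)
    show "finite S'" unfolding S'_def using fin by auto
    fix x y assume xy: "0 \<le> x" "x \<le> y" "y \<le> 1" "sfree S' x y"
    then have sf: "sfree S x y" unfolding sfree_def S'_def by auto
    obtain p q where pq: "p \<in> S" "q \<in> S" "0 \<le> p" "p \<le> x" "y \<le> q" "q \<le> 1" "sfree S p q"
      using enclose[OF fin S01 xy(1,2,3) sf] by blast
    have Hpq: "affon (f p q) p q" "affon (g p q) p q" "\<forall>t. p \<le> t \<and> t \<le> q \<longrightarrow> G t = min (f p q t) (g p q t)"
      using H[OF pq(1,2,3) _ pq(6,7)] pq xy by auto
    obtain a1 b1 a2 b2 where ab: "\<forall>z. p \<le> z \<and> z \<le> q \<longrightarrow> f p q z = a1 + b1*z"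
      "\<forall>z. p \<le> z \<and> z \<le> q \<longrightarrow> g p q z = a2 + b2*z" using Hpq(1,2) unfolding affon_def by blast
    define a b where "a = a1 - a2" and "b = b1 - b2"
    have dz: "\<And>z. p \<le> z \<Longrightarrow> z \<le> q \<Longrightarrow> f p q z - g p q z = a + b*z"
      using ab unfolding a_def b_def by (auto simp: algebra_simps)
    show "affon G x y"
    proof (cases "(a + b*x) * (a + b*y) < 0")
      case True
      have "x \<noteq> y" using True by (metis mult_less_0_iff order_less_asym)
      then have xly: "x < y" using xy by simp
      have bnz: "b \<noteq> 0" using True by auto
      define z0 where "z0 = - a / b"
      have z0: "x < z0 \<and> z0 < y"
      proof (cases "b > 0")
        case True
        have "a + b*x < 0 \<and> 0 < a + b*y"
        proof -
          have "b*x < b*y" using True xly by simp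
          then show ?thesis using `(a + b*x) * (a + b*y) < 0` by (auto simp: mult_less_0_iff)
        qed
        then show ?thesis unfolding z0_def using True by (auto simp: field_simps)
      next
        case False
        then have bn: "b < 0" using bnz by simp
        have "a + b*x > 0 \<and> 0 > a + b*y"
        proof -
          have "b*x > b*y" using bn xly by simp
          then show ?thesis using `(a + b*x) * (a + b*y) < 0` by (auto simp: mult_less_0_iff)
        qed
        then show ?thesis unfolding z0_def using bn by (auto simp: field_simps)
      qed
      have pq': "p < q" using pq xly by simp
      have "chi (p,q) = z0"
      proof -
        have e1: "f p q p - g p q p = a + b*p" using dz pq' by simp
        have e2: "f p q q - g p q q = a + b*q" using dz pq' by simp
        have "chi (p,q) = p + (q-p) * (a + b*p) / ((a+b*p) - (a+b*q))"
          unfolding chi_def using e1 e2 by simp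
        also have "\<dots> = z0" unfolding z0_def using bnz pq' by (simp add: field_simps)
        finally show ?thesis .
      qed
      then have "z0 \<in> S'" unfolding S'_def using pq by force
      then show ?thesis using xy(4) z0 unfolding sfree_def by blast
    next
      case False
      then have "(a + b*x) \<ge> 0 \<and> (a + b*y) \<ge> 0 \<or> (a + b*x) \<le> 0 \<and> (a + b*y) \<le> 0"
        by (metis linorder_not_le mult_nonneg_nonpos mult_nonpos_nonneg not_less zero_le_mult_iff)
      then show ?thesis
      proof
        assume h: "(a + b*x) \<ge> 0 \<and> (a + b*y) \<ge> 0"
        have "\<forall>z. x \<le> z \<and> z \<le> y \<longrightarrow> G z = a2 + b2*z"
        proof (intro allI impI)
          fix z assume z: "x \<le> z \<and> z \<le> y"
          have "a + b*z \<ge> 0" using lin_between[of x z y a b] z h by auto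
          then have "f p q z - g p q z \<ge> 0" using dz[of z] z pq by auto
          then show "G z = a2 + b2*z" using Hpq(3) ab z pq by (auto simp: min_def)
        qed
        then show ?thesis unfolding affon_def by blast
      next
        assume h: "(a + b*x) \<le> 0 \<and> (a + b*y) \<le> 0"
        have "\<forall>z. x \<le> z \<and> z \<le> y \<longrightarrow> G z = a1 + b1*z"
        proof (intro allI impI)
          fix z assume z: "x \<le> z \<and> z \<le> y"
          have "a + b*z \<le> 0" using lin_between[of x z y a b] z h by auto
          then have "f p q z - g p q z \<le> 0" using dz[of z] z pq by auto
          then show "G z = a1 + b1*z" using Hpq(3) ab z pq by (auto simp: min_def)
        qed
        then show ?thesis unfolding affon_def by blast
      qed
    qed
  qed
  then show ?thesis unfolding PL_def by blast
qed

lemma PL_min: assumes "PL f" "PL g" shows "PL (\<lambda>t. min (f t) (g t))"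
proof -
  obtain S1 S2 where 1: "PLw S1 f" and 2: "PLw S2 g" using assms unfolding PL_def by blast
  define S where "S = S1 \<union> S2 \<union> {0,1}"
  show ?thesis
  proof (rule PL_min_gen[where S=S and f="\<lambda>p q. f" and g="\<lambda>p q. g"])
    show "finite S" unfolding S_def using 1 2 unfolding PLw_def by auto
    show "0 \<in> S" "1 \<in> S" unfolding S_def by auto
    fix p q assume "p \<in> S" "q \<in> S" "0 \<le> p" "p \<le> q" "q \<le> 1" "sfree S p q"
    moreover then have "sfree S1 p q" "sfree S2 p q" unfolding S_def sfree_def by auto
    ultimately show "affon f p q \<and> affon g p q \<and> (\<forall>t. p \<le> t \<and> t \<le> q \<longrightarrow> min (f t) (g t) = min (f t) (g t))"
      using 1 2 unfolding PLw_def by auto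
  qed
qed

lemma PL_max: assumes "PL f" "PL g" shows "PL (\<lambda>t. max (f t) (g t))"
proof -
  have "PL (\<lambda>t. (-1) * min ((-1) * f t) ((-1) * g t))"
    by (intro PL_scale PL_min assms)
  moreover have "(\<lambda>t. (-1) * min ((-1) * f t) ((-1) * g t)) = (\<lambda>t. max (f t) (g t))"
    by (auto simp: min_def max_def)
  ultimately show ?thesis by simp
qed

lemma PL_attain:
  assumes "PL g" "0 \<le> a" "a \<le> b" "b \<le> 1"
  shows "\<exists>s. a \<le> s \<and> s \<le> b \<and> (\<forall>u. a \<le> u \<and> u \<le> b \<longrightarrow> g s \<le> g u)"
proof -
  obtain S where S: "PLw S g" using assms unfolding PL_def by blast
  define T where "T = insert a (insert b {s\<in>S. a \<le> s \<and> s \<le> b})"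
  have fT: "finite T" "T \<noteq> {}" unfolding T_def using S unfolding PLw_def by auto
  obtain s where s: "s \<in> T" "g s = Min (g ` T)" using fT
    by (metis (mono_tags, lifting) Min_in finite_imageI image_iff image_is_empty)
  have sT: "\<And>t. t \<in> T \<Longrightarrow> g s \<le> g t" using s fT by auto
  have "\<forall>u. a \<le> u \<and> u \<le> b \<longrightarrow> g s \<le> g u"
  proof (intro allI impI)
    fix u assume u: "a \<le> u \<and> u \<le> b"
    have sfu: "sfree T u u" unfolding sfree_def by auto
    obtain x y where xy: "x \<in> T" "y \<in> T" "a \<le> x" "x \<le> u" "u \<le> y" "y \<le> b" "sfree T x y"
      using enclose[OF fT(1), of a b u u] u sfu unfolding T_def by auto
    have "sfree S x y" using xy(7) xy(3,6) unfolding sfree_def T_def by force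
    then have "affon g x y" using S xy assms unfolding PLw_def by auto
    then have "min (g x) (g y) \<le> g u" using affon_min xy by blast
    then show "g s \<le> g u" using sT[OF xy(1)] sT[OF xy(2)] by linarith
  qed
  moreover have "a \<le> s \<and> s \<le> b" using s(1) assms unfolding T_def by auto
  ultimately show ?thesis by blast
qed

lemma minon_char:
  assumes "PL g" "0 \<le> a" "a \<le> b" "b \<le> 1"
  shows "(\<exists>s. a \<le> s \<and> s \<le> b \<and> g s = minon g a b) \<and> (\<forall>s. a \<le> s \<and> s \<le> b \<longrightarrow> minon g a b \<le> g s)"
proof -
  obtain s where s: "a \<le> s" "s \<le> b" "\<forall>u. a \<le> u \<and> u \<le> b \<longrightarrow> g s \<le> g u"
    using PL_attain[OF assms] by blast
  have "minon g a b = g s" unfolding minon_def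
  proof (rule the_equality)
    show "(\<exists>s'. a \<le> s' \<and> s' \<le> b \<and> g s' = g s) \<and> (\<forall>s'. a \<le> s' \<and> s' \<le> b \<longrightarrow> g s \<le> g s')"
      using s by blast
    fix q assume "(\<exists>s'. a \<le> s' \<and> s' \<le> b \<and> g s' = q) \<and> (\<forall>s'. a \<le> s' \<and> s' \<le> b \<longrightarrow> q \<le> g s')"
    then show "q = g s" using s by force
  qed
  then show ?thesis using s by auto
qed

lemma minon_cong: "(\<And>s. a \<le> s \<Longrightarrow> s \<le> b \<Longrightarrow> g s = g' s) \<Longrightarrow> minon g a b = minon g' a b"
  unfolding minon_def by (metis (no_types, lifting))

lemma PL_ivt_up:
  assumes "PL g" "0 \<le> a" "a \<le> b" "b \<le> 1" "g a \<le> v" "v \<le> g b"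
  shows "\<exists>s. a \<le> s \<and> s \<le> b \<and> g s = v"
proof -
  obtain S where S: "PLw S g" using assms unfolding PL_def by blast
  define T where "T = insert a (insert b {s\<in>S. a \<le> s \<and> s \<le> b})"
  have fT: "finite T" unfolding T_def using S unfolding PLw_def by auto
  define L where "L = {t\<in>T. g t \<le> v}"
  have fL: "finite L" "L \<noteq> {}" unfolding L_def T_def using fT assms by (auto simp: T_def)
  define s0 where "s0 = Max L"
  have s0: "s0 \<in> L" using fL Max_in s0_def by blast
  have s0ab: "a \<le> s0" "s0 \<le> b" using s0 assms unfolding L_def T_def by auto
  show ?thesis
  proof (cases "g s0 = v")
    case True then show ?thesis using s0ab by blast
  next
    case False
    then have gs0: "g s0 < v" using s0 unfolding L_def by auto
    then have "s0 \<noteq> b" using assms by auto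
    then have s0b: "s0 < b" using s0ab by simp
    define R where "R = {t\<in>T. s0 < t}"
    have fR: "finite R" "R \<noteq> {}" unfolding R_def using fT s0b by (auto simp: T_def)
    define s1 where "s1 = Min R"
    have s1: "s1 \<in> R" using fR Min_in s1_def by blast
    have s1T: "s1 \<in> T" "s0 < s1" "s1 \<le> b" using s1 assms unfolding R_def T_def by auto
    have gs1: "g s1 > v"
    proof (rule ccontr)
      assume "\<not> g s1 > v"
      then have "s1 \<in> L" using s1T unfolding L_def by auto
      then have "s1 \<le> s0" using fL s0_def by auto
      then show False using s1T by simp
    qed
    have "sfree S s0 s1" unfolding sfree_def
    proof (intro ballI notI)
      fix s assume "s \<in> S" "s0 < s \<and> s < s1"
      then have "s \<in> R" unfolding R_def T_def using s0ab s1T by auto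
      then have "s1 \<le> s" using fR s1_def by auto
      then show False using `s0 < s \<and> s < s1` by simp
    qed
    then have "affon g s0 s1" using S s0ab s1T assms unfolding PLw_def by auto
    then obtain \<alpha> \<beta> where ab: "\<forall>z. s0 \<le> z \<and> z \<le> s1 \<longrightarrow> g z = \<alpha> + \<beta>*z" unfolding affon_def by blast
    have e0: "g s0 = \<alpha> + \<beta>*s0" and e1: "g s1 = \<alpha> + \<beta>*s1" using ab s1T by auto
    have "\<beta> * s0 < \<beta> * s1" using e0 e1 gs0 gs1 by linarith
    then have bp: "\<beta> > 0" using s1T
      by (metis linorder_not_less mult_le_cancel_left_neg order_less_imp_le order_less_le_trans
                 mult_le_cancel_left less_irrefl)
    define z where "z = (v - \<alpha>)/\<beta>"
    have zz: "\<alpha> + \<beta>*z = v" unfolding z_def using bp by (simp add: field_simps)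
    have "\<beta>*s0 \<le> \<beta>*z" "\<beta>*z \<le> \<beta>*s1" using zz e0 e1 gs0 gs1 by linarith+
    then have "s0 \<le> z" "z \<le> s1" using bp by auto
    then show ?thesis using ab zz s0ab s1T by (intro exI[of _ z]) auto
  qed
qed

lemma PL_ivt_down:
  assumes "PL g" "0 \<le> a" "a \<le> b" "b \<le> 1" "g a \<ge> v" "v \<ge> g b"
  shows "\<exists>s. a \<le> s \<and> s \<le> b \<and> g s = v"
proof -
  have "PL (\<lambda>t. (-1) * g t)" using PL_scale assms by blast
  then obtain s where "a \<le> s \<and> s \<le> b \<and> (-1) * g s = - v"
    using PL_ivt_up[of "\<lambda>t. (-1) * g t" a b "-v"] assms by auto
  then show ?thesis by auto
qed

lemma PL_rmin: assumes "PL h" shows "PL (\<lambda>t. minon h t 1)"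
proof -
  obtain Sh where Sh: "PLw Sh h" using assms unfolding PL_def by blast
  define S where "S = Sh \<union> {0,1}"
  show ?thesis
  proof (rule PL_min_gen[where S=S and f="\<lambda>p q. h" and g="\<lambda>p q t. minon h q 1"])
    show "finite S" unfolding S_def using Sh unfolding PLw_def by auto
    show "0 \<in> S" "1 \<in> S" unfolding S_def by auto
    fix p q assume pq: "p \<in> S" "q \<in> S" "0 \<le> p" "p \<le> q" "q \<le> 1" "sfree S p q"
    then have "sfree Sh p q" unfolding S_def sfree_def by auto
    then have ah: "affon h p q" using Sh pq unfolding PLw_def by auto
    have ac: "affon (\<lambda>t. minon h q 1) p q" unfolding affon_def by (intro exI[of _ "minon h q 1"] exI[of _ 0]) auto
    have "\<forall>t. p \<le> t \<and> t \<le> q \<longrightarrow> minon h t 1 = min (h t) (minon h q 1)"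
    proof (intro allI impI)
      fix t assume t: "p \<le> t \<and> t \<le> q"
      obtain s where s: "t \<le> s" "s \<le> 1" "h s = minon h t 1" and sm: "\<forall>u. t \<le> u \<and> u \<le> 1 \<longrightarrow> minon h t 1 \<le> h u"
        using minon_char[OF assms, of t 1] t pq by auto
      obtain s' where s': "q \<le> s'" "s' \<le> 1" "h s' = minon h q 1" and sm': "\<forall>u. q \<le> u \<and> u \<le> 1 \<longrightarrow> minon h q 1 \<le> h u"
        using minon_char[OF assms, of q 1] t pq by auto
      have le1: "minon h t 1 \<le> min (h t) (minon h q 1)"
        using sm[rule_format, of t] sm[rule_format, of s'] s' t pq by auto
      have le2: "min (h t) (minon h q 1) \<le> minon h t 1"
      proof (cases "s \<le> q")
        case True
        have "affon h t q" using affon_sub[OF ah] t by auto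
        then have "min (h t) (h q) \<le> h s" using affon_min True s by blast
        moreover have "minon h q 1 \<le> h q" using sm' pq by auto
        ultimately show ?thesis using s by linarith
      next
        case False
        then show ?thesis using sm'[rule_format, of s] s by auto
      qed
      show "minon h t 1 = min (h t) (minon h q 1)" using le1 le2 by linarith
    qed
    then show "affon h p q \<and> affon (\<lambda>t. minon h q 1) p q \<and> (\<forall>t. p \<le> t \<and> t \<le> q \<longrightarrow> minon h t 1 = min (h t) (minon h q 1))"
      using ah ac by blast
  qed
qed

lemma PL_lmin: assumes "PL h" shows "PL (\<lambda>t. minon h 0 t)"
proof -
  obtain Sh where Sh: "PLw Sh h" using assms unfolding PL_def by blast
  define S where "S = Sh \<union> {0,1}"
  show ?thesis
  proof (rule PL_min_gen[where S=S and f="\<lambda>p q. h" and g="\<lambda>p q t. minon h 0 p"])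
    show "finite S" unfolding S_def using Sh unfolding PLw_def by auto
    show "0 \<in> S" "1 \<in> S" unfolding S_def by auto
    fix p q assume pq: "p \<in> S" "q \<in> S" "0 \<le> p" "p \<le> q" "q \<le> 1" "sfree S p q"
    then have "sfree Sh p q" unfolding S_def sfree_def by auto
    then have ah: "affon h p q" using Sh pq unfolding PLw_def by auto
    have ac: "affon (\<lambda>t. minon h 0 p) p q" unfolding affon_def by (intro exI[of _ "minon h 0 p"] exI[of _ 0]) auto
    have "\<forall>t. p \<le> t \<and> t \<le> q \<longrightarrow> minon h 0 t = min (h t) (minon h 0 p)"
    proof (intro allI impI)
      fix t assume t: "p \<le> t \<and> t \<le> q"
      obtain s where s: "0 \<le> s" "s \<le> t" "h s = minon h 0 t" and sm: "\<forall>u. 0 \<le> u \<and> u \<le> t \<longrightarrow> minon h 0 t \<le> h u"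
        using minon_char[OF assms, of 0 t] t pq by auto
      obtain s' where s': "0 \<le> s'" "s' \<le> p" "h s' = minon h 0 p" and sm': "\<forall>u. 0 \<le> u \<and> u \<le> p \<longrightarrow> minon h 0 p \<le> h u"
        using minon_char[OF assms, of 0 p] t pq by auto
      have le1: "minon h 0 t \<le> min (h t) (minon h 0 p)"
        using sm[rule_format, of t] sm[rule_format, of s'] s' t pq by auto
      have le2: "min (h t) (minon h 0 p) \<le> minon h 0 t"
      proof (cases "p \<le> s")
        case True
        have "affon h p t" using affon_sub[OF ah] t by auto
        then have "min (h p) (h t) \<le> h s" using affon_min True s by blast
        moreover have "minon h 0 p \<le> h p" using sm' pq by auto
        ultimately show ?thesis using s by linarith
      next
        case False
        then show ?thesis using sm'[rule_format, of s] s by auto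
      qed
      show "minon h 0 t = min (h t) (minon h 0 p)" using le1 le2 by linarith
    qed
    then show "affon h p q \<and> affon (\<lambda>t. minon h 0 p) p q \<and> (\<forall>t. p \<le> t \<and> t \<le> q \<longrightarrow> minon h 0 t = min (h t) (minon h 0 p))"
      using ah ac by blast
  qed
qed

definition Inv :: "(rat \<Rightarrow> 'i wt) \<Rightarrow> bool" where
  "Inv p \<longleftrightarrow> (\<forall>k. PL (\<lambda>t. p t (Some k))) \<and> (\<forall>k. p 0 (Some k) = 0)"

definition hh :: "(rat \<Rightarrow> 'i wt) \<Rightarrow> 'i \<Rightarrow> rat \<Rightarrow> rat" where
  "hh p j = (\<lambda>t. pair (p t) j)"

definition QQ :: "(rat \<Rightarrow> 'i wt) \<Rightarrow> 'i \<Rightarrow> rat" where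
  "QQ p j = minon (hh p j) 0 1"

lemma Inv_hh: "Inv p \<Longrightarrow> PL (hh p j)"
  unfolding Inv_def hh_def pair_def by auto

lemma Inv_hh0: "Inv p \<Longrightarrow> hh p j 0 = 0"
  unfolding Inv_def hh_def pair_def by auto

lemma QQ_le: assumes "Inv p" "0 \<le> s" "s \<le> 1" shows "QQ p j \<le> hh p j s"
  using minon_char[OF Inv_hh[OF assms(1)], of 0 1 j] assms unfolding QQ_def by auto

lemma minon_pt: "PL g \<Longrightarrow> 0 \<le> a \<Longrightarrow> a \<le> 1 \<Longrightarrow> minon g a a = g a"
  using minon_char[of g a a] by force

lemma fop_step:
  assumes inv: "Inv p" and Ajj: "A j j = 2" and cond: "1 \<le> hh p j 1 - QQ p j"
  shows "\<exists>p1. fop A i0 a0 j p = Some p1 \<and> Inv p1 \<and> hh p1 j 1 = hh p j 1 - 2 \<and> QQ p1 j \<le> QQ p j - 1"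
proof -
  define h where "h = hh p j"
  define Q where "Q = QQ p j"
  have Qd: "Q = minon h 0 1" unfolding Q_def QQ_def h_def ..
  have PLh: "PL h" unfolding h_def using Inv_hh[OF inv] .
  define m where "m = (\<lambda>t. minon h t 1)"
  define c where "c = (\<lambda>t. min 1 (m t - Q))"
  define p1 where "p1 = (\<lambda>t. wadd (p t) (wsmul (- min 1 (minon h t 1 - Q)) (sroot A i0 a0 j)))"
  have fop: "fop A i0 a0 j p = Some p1"
    unfolding fop_def p1_def Let_def using cond unfolding Qd h_def QQ_def hh_def by auto
  have p1k: "\<And>t k. p1 t (Some k) = p t (Some k) - of_int (A k j) * c t"
    unfolding p1_def c_def m_def wadd_def wsmul_def sroot_def by (simp add: algebra_simps)
  have PLm: "PL m" unfolding m_def using PL_rmin[OF PLh] .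
  have PLc: "PL c" unfolding c_def using PL_min[OF PL_const PL_diff[OF PLm PL_const]] .
  have m0: "m 0 = Q" unfolding m_def Qd ..
  have m1: "m 1 = h 1" unfolding m_def using minon_pt[OF PLh] by simp
  have c0: "c 0 = 0" unfolding c_def m0 by simp
  have c1: "c 1 = 1" unfolding c_def m1 using cond unfolding h_def Q_def by simp
  have inv1: "Inv p1" unfolding Inv_def
  proof (intro conjI allI)
    fix k
    have "PL (\<lambda>t. p t (Some k) - of_int (A k j) * c t)"
      using PL_diff[OF _ PL_scale[OF PLc]] inv unfolding Inv_def by blast
    then show "PL (\<lambda>t. p1 t (Some k))" unfolding p1k .
    show "p1 0 (Some k) = 0" unfolding p1k c0 using inv unfolding Inv_def by simp
  qed
  have h1: "\<And>t. hh p1 j t = h t - 2 * c t" unfolding hh_def pair_def p1k h_def Ajj by simp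
  have "hh p1 j 1 = hh p j 1 - 2" unfolding h1 c1 h_def by simp
  moreover have "QQ p1 j \<le> Q - 1"
  proof -
    have "h 1 \<ge> Q + 1" using cond unfolding h_def Q_def by simp
    then obtain s where s: "0 \<le> s" "s \<le> 1" "m s = Q + 1"
      using PL_ivt_up[OF PLm, of 0 1 "Q+1"] m0 m1 by auto
    obtain s' where s': "s \<le> s'" "s' \<le> 1" "h s' = m s"
      using minon_char[OF PLh, of s 1] s unfolding m_def by auto
    obtain s'' where s'': "s' \<le> s''" "s'' \<le> 1" "h s'' = m s'"
      using minon_char[OF PLh, of s' 1] s s' unfolding m_def by auto
    have "\<forall>u. s \<le> u \<and> u \<le> 1 \<longrightarrow> m s \<le> h u" using minon_char[OF PLh, of s 1] s unfolding m_def by auto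
    moreover have "s \<le> s''" using s' s'' by simp
    ultimately have "m s \<le> h s''" using s'' by blast
    then have "m s \<le> m s'" using s'' by simp
    then have "c s' = 1" unfolding c_def using s by simp
    then have "hh p1 j s' = Q - 1" unfolding h1 using s' s by simp
    then show ?thesis using QQ_le[OF inv1, of s' j] s s' by simp
  qed
  ultimately show ?thesis using fop inv1 unfolding Q_def by blast
qed

lemma eop_step:
  assumes inv: "Inv p" and Ajj: "A j j = 2" and cond: "QQ p j \<le> -1"
  shows "\<exists>p1. eop A i0 a0 j p = Some p1 \<and> Inv p1 \<and> QQ p1 j \<le> QQ p j + 1"
proof -
  define h where "h = hh p j"
  define Q where "Q = QQ p j"
  have Qd: "Q = minon h 0 1" unfolding Q_def QQ_def h_def ..
  have PLh: "PL h" unfolding h_def using Inv_hh[OF inv] .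
  define l where "l = (\<lambda>t. minon h 0 t)"
  define d where "d = (\<lambda>t. max 0 (Q + 1 - l t))"
  define p1 where "p1 = (\<lambda>t. wadd (p t) (wsmul (max 0 (Q + 1 - minon h 0 t)) (sroot A i0 a0 j)))"
  have eop: "eop A i0 a0 j p = Some p1"
    unfolding eop_def p1_def Let_def using cond unfolding Qd h_def QQ_def hh_def by auto
  have p1k: "\<And>t k. p1 t (Some k) = p t (Some k) + of_int (A k j) * d t"
    unfolding p1_def d_def l_def wadd_def wsmul_def sroot_def by (simp add: algebra_simps)
  have PLl: "PL l" unfolding l_def using PL_lmin[OF PLh] .
  have PLd: "PL d" unfolding d_def using PL_max[OF PL_const PL_diff[OF PL_const PLl]] .
  have h0: "h 0 = 0" unfolding h_def using Inv_hh0[OF inv] .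
  have l0: "l 0 = 0" unfolding l_def using minon_pt[OF PLh, of 0] h0 by simp
  have l1: "l 1 = Q" unfolding l_def Qd ..
  have d0: "d 0 = 0" unfolding d_def l0 using cond unfolding Q_def by simp
  have inv1: "Inv p1" unfolding Inv_def
  proof (intro conjI allI)
    fix k
    have "PL (\<lambda>t. p t (Some k) + of_int (A k j) * d t)"
      using PL_add[OF _ PL_scale[OF PLd]] inv unfolding Inv_def by blast
    then show "PL (\<lambda>t. p1 t (Some k))" unfolding p1k .
    show "p1 0 (Some k) = 0" unfolding p1k d0 using inv unfolding Inv_def by simp
  qed
  have h1: "\<And>t. hh p1 j t = h t + 2 * d t" unfolding hh_def pair_def p1k h_def Ajj by simp
  have "QQ p1 j \<le> Q + 1"
  proof -
    have "Q + 1 \<le> 0" using cond unfolding Q_def by simp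
    then obtain s where s: "0 \<le> s" "s \<le> 1" "l s = Q + 1"
      using PL_ivt_down[OF PLl, of 0 1 "Q+1"] l0 l1 by auto
    obtain s' where s': "0 \<le> s'" "s' \<le> s" "h s' = l s"
      using minon_char[OF PLh, of 0 s] s unfolding l_def by auto
    obtain s'' where s'': "0 \<le> s''" "s'' \<le> s'" "h s'' = l s'"
      using minon_char[OF PLh, of 0 s'] s s' unfolding l_def by auto
    have "\<forall>u. 0 \<le> u \<and> u \<le> s \<longrightarrow> l s \<le> h u" using minon_char[OF PLh, of 0 s] s unfolding l_def by auto
    moreover have "s'' \<le> s" using s' s'' by simp
    ultimately have "l s \<le> h s''" using s'' by blast
    then have "l s \<le> l s'" using s'' by simp
    then have "d s' = 0" unfolding d_def using s by simp
    then have "hh p1 j s' = Q + 1" unfolding h1 using s' s by simp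
    then show ?thesis using QQ_le[OF inv1, of s' j] s s' by simp
  qed
  then show ?thesis using eop inv1 unfolding Q_def by blast
qed

lemma funpow_bind_None: "((\<lambda>y. Option.bind y (g :: 'a \<Rightarrow> 'a option)) ^^ k) None = None"
proof (induction k)
  case 0 show ?case by simp
next
  case (Suc k) then show ?case by simp
qed

lemma opow_0: "opow g 0 x = Some x" unfolding opow_def by simp

lemma opow_Suc: "opow g (Suc k) x = (case g x of None \<Rightarrow> None | Some y \<Rightarrow> opow g k y)"
  unfolding opow_def funpow_Suc_right comp_def by (cases "g x") (auto simp: funpow_bind_None)

lemma fop_iter:
  assumes "Inv p" "A j j = 2" "of_nat k \<le> hh p j 1 - QQ p j"
  shows "\<exists>r. opow (fop A i0 a0 j) k p = Some r \<and> Inv r"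
  using assms
proof (induction k arbitrary: p)
  case 0 then show ?case by (simp add: opow_0)
next
  case (Suc k)
  obtain p1 where p1: "fop A i0 a0 j p = Some p1" "Inv p1" "hh p1 j 1 = hh p j 1 - 2" "QQ p1 j \<le> QQ p j - 1"
    using fop_step[where A=A and j=j, OF Suc.prems(1,2)] Suc.prems(3) by fastforce
  have "of_nat k \<le> hh p1 j 1 - QQ p1 j" using p1(3,4) Suc.prems(3) by simp
  then show ?case using Suc.IH[OF p1(2) Suc.prems(2)] p1(1) by (simp add: opow_Suc)
qed

lemma eop_iter:
  assumes "Inv p" "A j j = 2" "of_nat k + QQ p j \<le> 0"
  shows "\<exists>r. opow (eop A i0 a0 j) k p = Some r \<and> Inv r"
  using assms
proof (induction k arbitrary: p)
  case 0 then show ?case by (simp add: opow_0)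
next
  case (Suc k)
  obtain p1 where p1: "eop A i0 a0 j p = Some p1" "Inv p1" "QQ p1 j \<le> QQ p j + 1"
    using eop_step[where A=A and j=j, OF Suc.prems(1,2)] Suc.prems(3) by fastforce
  have "of_nat k + QQ p1 j \<le> 0" using p1(3) Suc.prems(3) by simp
  then show ?case using Suc.IH[OF p1(2) Suc.prems(2)] p1(1) by (simp add: opow_Suc)
qed

definition Rel :: "(rat \<Rightarrow> rat) \<Rightarrow> (rat \<Rightarrow> 'i wt) \<Rightarrow> (rat \<Rightarrow> 'i wt) \<Rightarrow> bool" where
  "Rel F p p' \<longleftrightarrow> (\<forall>t. 0 \<le> t \<and> t \<le> 1 \<longrightarrow> p t = wadd (p' t) (wsmul (F t) dlt))"

lemma Rel_pair: "Rel F p p' \<Longrightarrow> 0 \<le> t \<Longrightarrow> t \<le> 1 \<Longrightarrow> pair (p t) j = pair (p' t) j"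
  unfolding Rel_def wadd_def wsmul_def dlt_def pair_def by auto

lemma wadd_comm3: "wadd (wadd a b) c = wadd (wadd a c) b"
  unfolding wadd_def by (auto simp: algebra_simps)

lemma fop_rel:
  assumes R: "Rel F p p'"
  shows "rel_option (Rel F) (fop A i0 a0 j p) (fop A i0 a0 j p')"
proof -
  define h where "h = (\<lambda>t. pair (p t) j)"
  define h' where "h' = (\<lambda>t. pair (p' t) j)"
  have hh': "\<And>t. 0 \<le> t \<Longrightarrow> t \<le> 1 \<Longrightarrow> h t = h' t" unfolding h_def h'_def using Rel_pair[OF R] by blast
  have mt: "\<And>t. 0 \<le> t \<Longrightarrow> minon h t 1 = minon h' t 1" by (rule minon_cong) (auto intro: hh')
  have Q: "minon h 0 1 = minon h' 0 1" using mt by simp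
  have h1: "h 1 = h' 1" using hh' by simp
  show ?thesis
  proof (cases "h 1 - minon h 0 1 < 1")
    case True
    then show ?thesis unfolding fop_def Let_def h_def[symmetric] h'_def[symmetric] Q h1 by (simp add: h1[symmetric] Q[symmetric])
  next
    case False
    have "Rel F (\<lambda>t. wadd (p t) (wsmul (- min 1 (minon h t 1 - minon h 0 1)) (sroot A i0 a0 j)))
                (\<lambda>t. wadd (p' t) (wsmul (- min 1 (minon h' t 1 - minon h' 0 1)) (sroot A i0 a0 j)))"
      unfolding Rel_def
    proof (intro allI impI)
      fix t :: rat assume t: "0 \<le> t \<and> t \<le> 1"
      show "wadd (p t) (wsmul (- min 1 (minon h t 1 - minon h 0 1)) (sroot A i0 a0 j)) =
         wadd (wadd (p' t) (wsmul (- min 1 (minon h' t 1 - minon h' 0 1)) (sroot A i0 a0 j))) (wsmul (F t) dlt)"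
        using R t mt[of t] Q unfolding Rel_def by (simp add: wadd_comm3)
    qed
    then show ?thesis using False unfolding fop_def Let_def h_def[symmetric] h'_def[symmetric]
      by (simp add: h1[symmetric] Q[symmetric])
  qed
qed

lemma eop_rel:
  assumes R: "Rel F p p'"
  shows "rel_option (Rel F) (eop A i0 a0 j p) (eop A i0 a0 j p')"
proof -
  define h where "h = (\<lambda>t. pair (p t) j)"
  define h' where "h' = (\<lambda>t. pair (p' t) j)"
  have hh': "\<And>t. 0 \<le> t \<Longrightarrow> t \<le> 1 \<Longrightarrow> h t = h' t" unfolding h_def h'_def using Rel_pair[OF R] by blast
  have mt: "\<And>t. t \<le> 1 \<Longrightarrow> minon h 0 t = minon h' 0 t" by (rule minon_cong) (auto intro: hh')
  have Q: "minon h 0 1 = minon h' 0 1" using mt by simp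
  show ?thesis
  proof (cases "minon h 0 1 > -1")
    case True
    then show ?thesis unfolding eop_def Let_def h_def[symmetric] h'_def[symmetric] by (simp add: Q[symmetric])
  next
    case False
    have "Rel F (\<lambda>t. wadd (p t) (wsmul (max 0 (minon h 0 1 + 1 - minon h 0 t)) (sroot A i0 a0 j)))
                (\<lambda>t. wadd (p' t) (wsmul (max 0 (minon h' 0 1 + 1 - minon h' 0 t)) (sroot A i0 a0 j)))"
      unfolding Rel_def
    proof (intro allI impI)
      fix t :: rat assume t: "0 \<le> t \<and> t \<le> 1"
      show "wadd (p t) (wsmul (max 0 (minon h 0 1 + 1 - minon h 0 t)) (sroot A i0 a0 j)) =
         wadd (wadd (p' t) (wsmul (max 0 (minon h' 0 1 + 1 - minon h' 0 t)) (sroot A i0 a0 j))) (wsmul (F t) dlt)"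
        using R t mt[of t] Q unfolding Rel_def by (simp add: wadd_comm3)
    qed
    then show ?thesis using False unfolding eop_def Let_def h_def[symmetric] h'_def[symmetric]
      by (simp add: Q[symmetric])
  qed
qed

lemma opow_rel:
  assumes g: "\<And>x y. R x y \<Longrightarrow> rel_option R (g x) (g y)" and "R x y"
  shows "rel_option R (opow g k x) (opow g k y)"
  using assms(2)
proof (induction k arbitrary: x y)
  case 0 then show ?case by (simp add: opow_0)
next
  case (Suc k)
  have "rel_option R (g x) (g y)" using g Suc.prems .
  then show ?case
    by (cases "g x"; cases "g y") (auto simp: opow_Suc Suc.IH)
qed

lemma Sop_step:
  assumes inv: "Inv p" and R: "Rel F p p'" and Ajj: "A j j = 2"
  shows "Inv (Sop A i0 a0 j p) \<and> Rel F (Sop A i0 a0 j p) (Sop A i0 a0 j p')"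
proof -
  define n where "n = pair (p 1) j"
  have n': "pair (p' 1) j = n" unfolding n_def using Rel_pair[OF R, of 1] by simp
  define X where "X = (if n \<ge> 0 then opow (fop A i0 a0 j) (nat \<lfloor>n\<rfloor>) p else opow (eop A i0 a0 j) (nat \<lfloor>- n\<rfloor>) p)"
  define X' where "X' = (if n \<ge> 0 then opow (fop A i0 a0 j) (nat \<lfloor>n\<rfloor>) p' else opow (eop A i0 a0 j) (nat \<lfloor>- n\<rfloor>) p')"
  have S1: "Sop A i0 a0 j p = the X" unfolding Sop_def Let_def X_def n_def ..
  have S2: "Sop A i0 a0 j p' = the X'" unfolding Sop_def Let_def X'_def n' ..
  have hn: "hh p j 1 = n" unfolding hh_def n_def ..
  have Q0: "QQ p j \<le> 0" using QQ_le[OF inv, of 0 j] Inv_hh0[OF inv] by simp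
  have Q1: "QQ p j \<le> n" using QQ_le[OF inv, of 1 j] hn by simp
  have ex: "\<exists>r. X = Some r \<and> Inv r"
  proof (cases "n \<ge> 0")
    case True
    have "of_nat (nat \<lfloor>n\<rfloor>) = (of_int \<lfloor>n\<rfloor> :: rat)" using True by simp
    also have "\<dots> \<le> n" by (rule of_int_floor_le)
    finally have "of_nat (nat \<lfloor>n\<rfloor>) \<le> hh p j 1 - QQ p j" using Q0 hn by simp
    then show ?thesis using fop_iter[where A=A and j=j, OF inv Ajj] True unfolding X_def by simp
  next
    case False
    have "of_nat (nat \<lfloor>-n\<rfloor>) = (of_int \<lfloor>-n\<rfloor> :: rat)" using False by simp
    also have "\<dots> \<le> -n" by (rule of_int_floor_le)
    finally have "of_nat (nat \<lfloor>-n\<rfloor>) + QQ p j \<le> 0" using Q1 by simp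
    then show ?thesis using eop_iter[where A=A and j=j, OF inv Ajj] False unfolding X_def by simp
  qed
  have rel: "rel_option (Rel F) X X'" unfolding X_def X'_def
    using opow_rel[where R="Rel F" and g="fop A i0 a0 j", OF fop_rel R]
      opow_rel[where R="Rel F" and g="eop A i0 a0 j", OF eop_rel R] by simp
  obtain r where r: "X = Some r" "Inv r" using ex by blast
  then obtain r' where r': "X' = Some r'" "Rel F r r'" using rel by (cases X') auto
  show ?thesis using S1 S2 r r' by simp
qed

lemma Sword_step:
  assumes "Inv p" "Rel F p p'" "\<forall>j. A j j = 2"
  shows "Inv (Sword A i0 a0 js p) \<and> Rel F (Sword A i0 a0 js p) (Sword A i0 a0 js p')"
  using assms
proof (induction js)
  case Nil then show ?case by (simp add: Sword_def)
next
  case (Cons j js)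
  have e: "\<And>x. Sword A i0 a0 (j # js) x = Sop A i0 a0 j (Sword A i0 a0 js x)" by (simp add: Sword_def)
  have IH: "Inv (Sword A i0 a0 js p)" "Rel F (Sword A i0 a0 js p) (Sword A i0 a0 js p')"
    using Cons by auto
  show ?case unfolding e using Sop_step[where A=A and j=j, OF IH] Cons.prems(3) by blast
qed

lemma pl_PL: assumes "pl_on01 g" shows "PL (\<lambda>t. g t k)"
proof -
  obtain ts where ts: "ts \<noteq> []" "hd ts = 0" "last ts = 1" "sorted_wrt (<) ts"
    and seg: "\<forall>i < length ts - 1. \<forall>t. ts!i \<le> t \<and> t \<le> ts!(i+1) \<longrightarrow>
        (\<forall>k. g t k = g (ts!i) k + (t - ts!i) / (ts!(i+1) - ts!i) * (g (ts!(i+1)) k - g (ts!i) k))"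
    using assms unfolding pl_on01_def by blast
  define S where "S = set ts"
  have S01: "0 \<in> S" "1 \<in> S" unfolding S_def using ts
    by (metis hd_in_set, metis last_in_set)
  have "PLw S (\<lambda>t. g t k)" unfolding PLw_def
  proof (intro conjI allI impI)
    show "finite S" unfolding S_def by simp
    fix x y assume xy: "0 \<le> x" "x \<le> y" "y \<le> 1" "sfree S x y"
    have finS: "finite S" unfolding S_def by simp
    obtain p q where pq: "p \<in> S" "q \<in> S" "0 \<le> p" "p \<le> x" "y \<le> q" "q \<le> 1" "sfree S p q"
      using enclose[OF finS S01 xy] by blast
    show "affon (\<lambda>t. g t k) x y"
    proof (cases "p = q")
      case True
      then have "x = y" using pq xy by simp
      then show ?thesis using affon_triv by simp
    next
      case False
      then have pq': "p < q" using pq xy by simp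
      obtain i i' where ii: "i < length ts" "i' < length ts" "ts!i = p" "ts!i' = q"
        using pq(1,2) unfolding S_def by (metis in_set_conv_nth)
      have "i < i'"
      proof (rule ccontr)
        assume "\<not> i < i'"
        then have "i' \<le> i" by simp
        then have "ts!i' \<le> ts!i"
        proof (cases "i' = i")
          case False
          then have "i' < i" using `i' \<le> i` by simp
          then show ?thesis using sorted_wrt_nth_less[OF ts(4) `i' < i`] ii by simp
        qed simp
        then show False using ii pq' by simp
      qed
      have "i' = i + 1"
      proof (rule ccontr)
        assume "i' \<noteq> i + 1"
        then have "i + 1 < i'" using `i < i'` by simp
        then have "ts!i < ts!(i+1)" "ts!(i+1) < ts!i'" using ts(4) ii
          by (auto intro: sorted_wrt_nth_less)
        moreover have "ts!(i+1) \<in> S" unfolding S_def using ii `i+1 < i'` by simp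
        ultimately show False using pq(7) ii unfolding sfree_def by auto
      qed
      then have il: "i < length ts - 1" using ii by simp
      define \<beta> where "\<beta> = (g q k - g p k) / (q - p)"
      have "\<forall>t. p \<le> t \<and> t \<le> q \<longrightarrow> g t k = (g p k - p * \<beta>) + \<beta> * t"
      proof (intro allI impI)
        fix t assume "p \<le> t \<and> t \<le> q"
        then have "ts!i \<le> t \<and> t \<le> ts!(i+1)" using ii `i' = i+1` by simp
        then have "g t k = g (ts!i) k + (t - ts!i) / (ts!(i+1) - ts!i) * (g (ts!(i+1)) k - g (ts!i) k)"
          using seg il by blast
        then have "g t k = g p k + (t - p) / (q - p) * (g q k - g p k)" using ii `i' = i+1` by simp
        also have "\<dots> = g p k + (t - p) * \<beta>" unfolding \<beta>_def by simp
        also have "\<dots> = (g p k - p * \<beta>) + \<beta> * t" by (simp add: algebra_simps)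
        finally show "g t k = (g p k - p * \<beta>) + \<beta> * t" .
      qed
      then have "affon (\<lambda>t. g t k) p q" unfolding affon_def by blast
      then show ?thesis using affon_sub pq by blast
    qed
  qed
  then show ?thesis unfolding PL_def by blast
qed

theorem lemma2p27:
  fixes A :: "'i::finite \<Rightarrow> 'i \<Rightarrow> int"
    and a av :: "'i \<Rightarrow> nat" and i0 :: 'i
    and \<pi> \<pi>' :: "rat \<Rightarrow> 'i wt" and F :: "rat \<Rightarrow> rat"
  assumes "affine_gcm A" and "null_labels A a" and "dual_labels A av" and "node0 a av i0"
    and "\<pi> \<in> paths (a i0)" and "\<pi>' \<in> paths (a i0)"
    and "pl_scalar F" and "F 0 = 0" and "of_nat (a i0) * F 1 \<in> \<int>"
    and "\<forall>t. 0 \<le> t \<and> t \<le> 1 \<longrightarrow> \<pi> t = wadd (\<pi>' t) (wsmul (F t) dlt)"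
  shows "\<forall>w \<in> weyl A i0 (a i0). \<forall>t. 0 \<le> t \<and> t \<le> 1 \<longrightarrow>
           Sw A i0 (a i0) w \<pi> t = wadd (Sw A i0 (a i0) w \<pi>' t) (wsmul (F t) dlt)"
proof (intro ballI)
  fix w
  have Ajj: "\<forall>j. A j j = 2" using assms(1) unfolding affine_gcm_def gcm_def by blast
  have inv: "Inv \<pi>" unfolding Inv_def using assms(5) pl_PL unfolding paths_def wzero_def by auto
  have R: "Rel F \<pi> \<pi>'" unfolding Rel_def using assms(10) .
  show "\<forall>t. 0 \<le> t \<and> t \<le> 1 \<longrightarrow> Sw A i0 (a i0) w \<pi> t = wadd (Sw A i0 (a i0) w \<pi>' t) (wsmul (F t) dlt)"
    using Sword_step[where A=A, OF inv R Ajj] unfolding Sw_def Rel_def by blast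
qed

end
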